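(* There exists a probability function $w$ on $SL_3$ satisfying Constant Exchangeability and Predicate Exchangeability (Px) but not Strong Predicate Exchangeability (SPx). Concretely, with the atoms of $L_3$ listed in lexicographic order $\alpha_1,\dots,\alpha_8$ and $\vec b=\langle \tfrac1{19},\tfrac2{19},\tfrac4{19},\tfrac5{19},\tfrac2{19},\tfrac3{19},\tfrac1{19},\tfrac1{19}\rangle$, the function $w=\frac16\sum_{\sigma}w_{\sigma\vec b}$ (sum over the six permutations of atoms induced by permutations of the predicates $P_1,P_2,P_3$) satisfies Px, while the state descriptions $\Theta=\alpha_2(a_1)\wedge\alpha_4(a_2)\wedge\alpha_5(a_3)\wedge\alpha_7(a_4)\wedge\alpha_7(a_5)$ and $\Phi=\alpha_3(a_1)\wedge\alpha_5(a_2)\wedge\alpha_6(a_3)\wedge\alpha_6(a_4)\wedge\alpha_7(a_5)$ have the same P-spectrum but $w(\Theta)\neq w(\Phi)$.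
   Context: $L_q$ is the first-order language with unary predicates $P_1,\dots,P_q$ and constants $a_1,a_2,\dots$. Atoms $\alpha(x)=\bigwedge_{i=1}^q\pm P_i(x)$ are ordered lexicographically: $\alpha_1=\bigwedge P_i$, $\alpha_2=P_1\wedge\dots\wedge P_{q-1}\wedge\neg P_q$, etc., up to $\alpha_{2^q}=\bigwedge\neg P_i$. State descriptions are $\bigwedge_{i=1}^n\alpha_{h_i}(a_i)$. For $\vec x=\langle x_1,\dots,x_{2^q}\rangle$ with $x_j\ge0$, $\sum x_j=1$, the de Finetti function $w_{\vec x}$ is the probability function with $w_{\vec x}(\bigwedge_{i=1}^n\alpha_{h_i}(a_i))=\prod_{i=1}^n x_{h_i}$; a permutation $\sigma$ of atoms acts by $(\sigma\vec x)_{\sigma(j)}=x_j$. $\gamma_q(\alpha)$ is the number of negated predicates in $\alpha$. Px: $w$ is invariant under permuting the predicate symbols in sentences. P-spectrum of $\Theta=\bigwedge_k\alpha_{h_k}(a_k)$: for each $i\in\{0,\dots,q\}$, let $M_i$ be the multiset of sizes of the classes of the relation "$a_k\sim a_l\iff h_k=h_l$" on the constants whose atom has exactly $i$ negations; the P-spectrum is $\langle M_0,\dots,M_q\rangle$. SPx: $w(\Theta)=w(\Phi)$ whenever $\Theta,\Phi$ are state descriptions for the same constants with the same P-spectrum. *)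

theory Defs
  imports Complex_Main "HOL-Combinatorics.Permutations" "HOL-Library.Multiset"
begin

(* Atoms of L_q are indexed 1..2^q in lexicographic order:
   atom j contains +P_i iff bit (q-i) of (j-1) is 0.  So alpha_1 = all positive,
   alpha_2 = P_1 & ... & P_(q-1) & ~P_q, ..., alpha_(2^q) = all negative. *)
definition atom_pos :: "nat \<Rightarrow> nat \<Rightarrow> nat \<Rightarrow> bool" where
  "atom_pos q j i = (\<not> bit (j - 1) (q - i))"

definition atom_of_signs :: "nat \<Rightarrow> (nat \<Rightarrow> bool) \<Rightarrow> nat" where
  "atom_of_signs q s = 1 + (\<Sum>i=1..q. if s i then 0 else 2 ^ (q - i))"

definition gamma :: "nat \<Rightarrow> nat \<Rightarrow> nat" where
  "gamma q j = card {i \<in> {1..q}. \<not> atom_pos q j i}"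

(* Permutation of atoms induced by a permutation pi of the predicate symbols
   (P_i replaced by P_(pi i)): the sign of P_(pi i) in the new atom is the
   sign of P_i in the old one. *)
definition patom :: "nat \<Rightarrow> (nat \<Rightarrow> nat) \<Rightarrow> nat \<Rightarrow> nat" where
  "patom q \<pi> j = atom_of_signs q (\<lambda>i. atom_pos q j (inv_into {1..q} \<pi> i))"

(* State descriptions: finite partial maps from constant indices (a_c) to atom indices *)
type_synonym sdesc = "nat \<rightharpoonup> nat"

definition is_sd :: "nat \<Rightarrow> sdesc \<Rightarrow> bool" where
  "is_sd q \<Theta> \<longleftrightarrow> finite (dom \<Theta>) \<and> ran \<Theta> \<subseteq> {1..2^q}"

(* Probability function on SL_q, given by its values on state descriptions
   (determined by these by Gaifman's theorem) *)
definition prob_fn :: "nat \<Rightarrow> (sdesc \<Rightarrow> real) \<Rightarrow> bool" where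
  "prob_fn q w \<longleftrightarrow> w Map.empty = 1 \<and>
     (\<forall>\<Theta>. is_sd q \<Theta> \<longrightarrow> w \<Theta> \<ge> 0) \<and>
     (\<forall>\<Theta> c. is_sd q \<Theta> \<longrightarrow> c \<notin> dom \<Theta> \<longrightarrow>
          (\<Sum>j=1..2^q. w (\<Theta>(c \<mapsto> j))) = w \<Theta>)"

definition Cx :: "nat \<Rightarrow> (sdesc \<Rightarrow> real) \<Rightarrow> bool" where
  "Cx q w \<longleftrightarrow> (\<forall>\<rho> \<Theta>. bij \<rho> \<longrightarrow> is_sd q \<Theta> \<longrightarrow> w (\<Theta> \<circ> \<rho>) = w \<Theta>)"

definition Px :: "nat \<Rightarrow> (sdesc \<Rightarrow> real) \<Rightarrow> bool" where
  "Px q w \<longleftrightarrow> (\<forall>\<pi> \<Theta>. \<pi> permutes {1..q} \<longrightarrow> is_sd q \<Theta> \<longrightarrow>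
      w (map_option (patom q \<pi>) \<circ> \<Theta>) = w \<Theta>)"

definition P_spectrum :: "nat \<Rightarrow> sdesc \<Rightarrow> nat multiset list" where
  "P_spectrum q \<Theta> = map (\<lambda>i. image_mset (\<lambda>j. card {c \<in> dom \<Theta>. \<Theta> c = Some j})
        (mset_set {j \<in> ran \<Theta>. gamma q j = i})) [0..<Suc q]"

definition SPx :: "nat \<Rightarrow> (sdesc \<Rightarrow> real) \<Rightarrow> bool" where
  "SPx q w \<longleftrightarrow> (\<forall>\<Theta> \<Phi>. is_sd q \<Theta> \<longrightarrow> is_sd q \<Phi> \<longrightarrow> dom \<Theta> = dom \<Phi> \<longrightarrow>
      P_spectrum q \<Theta> = P_spectrum q \<Phi> \<longrightarrow> w \<Theta> = w \<Phi>)"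

definition deFinetti :: "(nat \<Rightarrow> real) \<Rightarrow> sdesc \<Rightarrow> real" where
  "deFinetti x \<Theta> = (\<Prod>c\<in>dom \<Theta>. x (the (\<Theta> c)))"

definition perm_vec :: "nat \<Rightarrow> (nat \<Rightarrow> nat) \<Rightarrow> (nat \<Rightarrow> real) \<Rightarrow> nat \<Rightarrow> real" where
  "perm_vec q \<sigma> x = (\<lambda>k. x (inv_into {1..2^q} \<sigma> k))"

definition bvec :: "nat \<Rightarrow> real" where
  "bvec j = (if 1 \<le> j \<and> j \<le> 8 then real ([1,2,4,5,2,3,1,1] ! (j - 1)) / 19 else 0)"

definition w_ex :: "sdesc \<Rightarrow> real" where
  "w_ex \<Theta> = (1/6) * (\<Sum>\<pi>\<in>{\<pi>. \<pi> permutes {1..3::nat}}.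
                         deFinetti (perm_vec 3 (patom 3 \<pi>) bvec) \<Theta>)"

definition Theta_ex :: sdesc where
  "Theta_ex = [1 \<mapsto> 2, 2 \<mapsto> 4, 3 \<mapsto> 5, 4 \<mapsto> 7, 5 \<mapsto> 7]"

definition Phi_ex :: sdesc where
  "Phi_ex = [1 \<mapsto> 3, 2 \<mapsto> 5, 3 \<mapsto> 6, 4 \<mapsto> 6, 5 \<mapsto> 7]"

end

theory Submission
  imports Defs
begin

definition plist :: "nat list list" where
 "plist = [[1,2,3],[1,3,2],[2,1,3],[2,3,1],[3,1,2],[3,2,1]]"
definition pk :: "nat \<Rightarrow> nat \<Rightarrow> nat" where
 "pk k i = (if i \<in> {1,2,3} then plist ! k ! (i - 1) else i)"
definition Ptab :: "nat list list" where
 "Ptab = [[1, 2, 3, 4, 5, 6, 7, 8], [1, 3, 2, 4, 5, 7, 6, 8], [1, 2, 5, 6, 3, 4, 7, 8], [1, 5, 2, 6, 3, 7, 4, 8], [1, 3, 5, 7, 2, 4, 6, 8], [1, 5, 3, 7, 2, 6, 4, 8]]"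
definition IPtab :: "nat list list" where
 "IPtab = [[1, 2, 3, 4, 5, 6, 7, 8], [1, 3, 2, 4, 5, 7, 6, 8], [1, 2, 5, 6, 3, 4, 7, 8], [1, 3, 5, 7, 2, 4, 6, 8], [1, 5, 2, 6, 3, 7, 4, 8], [1, 5, 3, 7, 2, 6, 4, 8]]"
definition Itab :: "nat list list" where
 "Itab = [[1,2,3],[1,3,2],[2,1,3],[3,1,2],[2,3,1],[3,2,1]]"
definition Vtab :: "nat list list" where
 "Vtab = [[1, 2, 4, 5, 2, 3, 1, 1], [1, 4, 2, 5, 2, 1, 3, 1], [1, 2, 2, 3, 4, 5, 1, 1], [1, 4, 2, 1, 2, 5, 3, 1], [1, 2, 2, 3, 4, 1, 5, 1], [1, 2, 4, 1, 2, 3, 5, 1]]"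
definition Vt :: "nat \<Rightarrow> nat \<Rightarrow> real" where
 "Vt k j = real (Vtab ! k ! (j - 1)) / 19"
definition tautab :: "nat list list" where
 "tautab = [[0, 1, 2, 3, 4, 5], [1, 0, 4, 5, 2, 3], [2, 3, 0, 1, 5, 4], [4, 5, 1, 0, 3, 2], [3, 2, 5, 4, 0, 1], [5, 4, 3, 2, 1, 0]]"
definition tau :: "nat \<Rightarrow> nat \<Rightarrow> nat" where
 "tau m k = tautab ! m ! k"

lemma set3: "{1..3::nat} = {1,2,3}" by auto
lemma set8: "{1..8::nat} = {1,2,3,4,5,6,7,8}" by auto
lemma set6: "{..<6::nat} = {0,1,2,3,4,5}" by auto

lemma aos3: "atom_of_signs 3 s = 1 + (if s 1 then 0 else 4) + (if s 2 then 0 else 2) + (if s 3 then 0 else 1)"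
  unfolding atom_of_signs_def set3 by simp

lemma inj_pk: "k < 6 \<Longrightarrow> inj_on (pk k) {1..3}"
proof -
  assume "k < 6"
  then have "k \<in> {0,1,2,3,4,5}" by auto
  then show ?thesis unfolding set3 by (auto simp: inj_on_def pk_def plist_def)
qed

lemma inv_pk2: "k < 6 \<Longrightarrow> i \<in> {1,2,3} \<Longrightarrow> inv_into {1..3} (pk k) i = Itab ! k ! (i - 1)"
proof -
  assume k: "k < 6" and i: "i \<in> {1,2,3}"
  have "pk k (Itab ! k ! (i - 1)) = i" "Itab ! k ! (i - 1) \<in> {1..3}"
    using k i by (auto simp: less_Suc_eq numeral_eq_Suc pk_def plist_def Itab_def)
  then show ?thesis using inv_into_f_eq[OF inj_pk[OF k]] by blast
qed

lemma patom_pk: "k < 6 \<Longrightarrow> j \<in> {1..8} \<Longrightarrow> patom 3 (pk k) j = Ptab ! k ! (j - 1)"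
proof -
  assume k: "k < 6" and j: "j \<in> {1..8}"
  have I: "inv_into {1..3} (pk k) 1 = Itab ! k ! 0" "inv_into {1..3} (pk k) 2 = Itab ! k ! 1"
     "inv_into {1..3} (pk k) 3 = Itab ! k ! 2" using inv_pk2[OF k] by auto
  have jj: "j = 1 \<or> j = 2 \<or> j = 3 \<or> j = 4 \<or> j = 5 \<or> j = 6 \<or> j = 7 \<or> j = 8" using j by auto
  have kk: "k = 0 \<or> k = 1 \<or> k = 2 \<or> k = 3 \<or> k = 4 \<or> k = 5" using k by auto
  show ?thesis unfolding patom_def aos3 I using kk jj
    by (elim disjE; simp add: atom_pos_def Itab_def Ptab_def bit_nat_def)
qed

lemma Ptab_range: "k < 6 \<Longrightarrow> j \<in> {1..8} \<Longrightarrow> Ptab ! k ! (j - 1) \<in> {1..8}"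
proof -
  assume k: "k < 6" and j: "j \<in> {1..8}"
  have jj: "j = 1 \<or> j = 2 \<or> j = 3 \<or> j = 4 \<or> j = 5 \<or> j = 6 \<or> j = 7 \<or> j = 8" using j by auto
  have kk: "k = 0 \<or> k = 1 \<or> k = 2 \<or> k = 3 \<or> k = 4 \<or> k = 5" using k by auto
  show ?thesis using kk jj by (elim disjE; simp add: Ptab_def)
qed

lemma IPtab_prop: "k < 6 \<Longrightarrow> j \<in> {1..8} \<Longrightarrow> IPtab ! k ! (j - 1) \<in> {1..8} \<and>
   Ptab ! k ! (IPtab ! k ! (j - 1) - 1) = j \<and> Vt k j = bvec (IPtab ! k ! (j - 1))"
proof -
  assume k: "k < 6" and j: "j \<in> {1..8}"
  have jj: "j = 1 \<or> j = 2 \<or> j = 3 \<or> j = 4 \<or> j = 5 \<or> j = 6 \<or> j = 7 \<or> j = 8" using j by auto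
  have kk: "k = 0 \<or> k = 1 \<or> k = 2 \<or> k = 3 \<or> k = 4 \<or> k = 5" using k by auto
  show ?thesis using kk jj by (elim disjE; simp add: Ptab_def IPtab_def Vt_def Vtab_def bvec_def)
qed

lemma inj_Ptab: "k < 6 \<Longrightarrow> inj_on (\<lambda>j. Ptab ! k ! (j - 1)) {1..8}"
proof -
  assume "k < 6"
  then have "k \<in> {0,1,2,3,4,5}" by auto
  then show ?thesis unfolding set8 by (auto simp: inj_on_def Ptab_def)
qed

lemma inj_patom: "k < 6 \<Longrightarrow> inj_on (patom 3 (pk k)) {1..8}"
  using inj_Ptab[of k] patom_pk[of k] by (simp add: inj_on_def)

lemma pv_pk: "k < 6 \<Longrightarrow> j \<in> {1..8} \<Longrightarrow> perm_vec 3 (patom 3 (pk k)) bvec j = Vt k j"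
proof -
  assume k: "k < 6" and j: "j \<in> {1..8}"
  note P = IPtab_prop[OF k j]
  have "patom 3 (pk k) (IPtab ! k ! (j - 1)) = j" using P patom_pk[OF k] by simp
  then have "inv_into {1..8} (patom 3 (pk k)) j = IPtab ! k ! (j - 1)"
    using inv_into_f_eq[OF inj_patom[OF k]] P by simp
  then show ?thesis using P by (simp add: perm_vec_def)
qed


lemma pk_permutes: "k < 6 \<Longrightarrow> pk k permutes {1..3}"
proof -
  assume k: "k < 6"
  then have kk: "k \<in> {0,1,2,3,4,5}" by auto
  have "pk k ` {1..3} = {1..3}" unfolding set3 using kk by (auto simp: pk_def plist_def)
  then have "bij_betw (pk k) {1..3} {1..3}" using inj_pk[OF k] by (simp add: bij_betw_def)
  moreover have "\<And>x. x \<notin> {1..3} \<Longrightarrow> pk k x = x" by (auto simp: pk_def)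
  ultimately show ?thesis by (rule bij_imp_permutes)
qed

lemma inj_pk_idx: "inj_on pk {..<6}"
proof (rule inj_onI)
  fix a b :: nat assume "a \<in> {..<6}" "b \<in> {..<6}" "pk a = pk b"
  then have "a \<in> {0,1,2,3,4,5}" "b \<in> {0,1,2,3,4,5}" "pk a 1 = pk b 1" "pk a 2 = pk b 2" by auto
  then show "a = b" by (auto simp: pk_def plist_def)
qed

lemma perm_set: "{\<pi>. \<pi> permutes {1..3::nat}} = pk ` {..<6}"
proof -
  have fin: "finite {\<pi>. \<pi> permutes {1..3::nat}}" by (rule finite_permutations) simp
  have "card {\<pi>. \<pi> permutes {1..3::nat}} = fact 3" by (rule card_permutations) auto
  then have c: "card {\<pi>. \<pi> permutes {1..3::nat}} = 6" by (simp add: numeral_eq_Suc)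
  have sub: "pk ` {..<6} \<subseteq> {\<pi>. \<pi> permutes {1..3::nat}}" using pk_permutes by auto
  have "card (pk ` {..<6}) = 6" using card_image[OF inj_pk_idx] by simp
  then show ?thesis using card_subset_eq[OF fin sub] c by simp
qed

definition DF :: "nat \<Rightarrow> sdesc \<Rightarrow> real" where
  "DF k \<Theta> = (\<Prod>c\<in>dom \<Theta>. Vt k (the (\<Theta> c)))"

lemma w_ex_eq: "w_ex \<Theta> = 1/6 * (\<Sum>k<6. deFinetti (perm_vec 3 (patom 3 (pk k)) bvec) \<Theta>)"
  unfolding w_ex_def perm_set by (simp add: sum.reindex[OF inj_pk_idx])

lemma DF_eq: "ran \<Theta> \<subseteq> {1..8} \<Longrightarrow> k < 6 \<Longrightarrow> deFinetti (perm_vec 3 (patom 3 (pk k)) bvec) \<Theta> = DF k \<Theta>"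
  unfolding deFinetti_def DF_def
proof (rule prod.cong)
  fix c assume "ran \<Theta> \<subseteq> {1..8}" "k < 6" "c \<in> dom \<Theta>"
  then have "the (\<Theta> c) \<in> {1..8}" by (auto simp: ran_def)
  then show "perm_vec 3 (patom 3 (pk k)) bvec (the (\<Theta> c)) = Vt k (the (\<Theta> c))"
    using pv_pk \<open>k < 6\<close> by blast
qed simp

lemma w_ex_DF: "ran \<Theta> \<subseteq> {1..8} \<Longrightarrow> w_ex \<Theta> = 1/6 * (\<Sum>k<6. DF k \<Theta>)"
  unfolding w_ex_eq using DF_eq by simp



lemma tau_Vt: "m < 6 \<Longrightarrow> k < 6 \<Longrightarrow> j \<in> {1..8} \<Longrightarrow> Vt k (Ptab ! m ! (j - 1)) = Vt (tau m k) j"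
proof -
  assume m: "m < 6" and k: "k < 6" and j: "j \<in> {1..8}"
  have jj: "j = 1 \<or> j = 2 \<or> j = 3 \<or> j = 4 \<or> j = 5 \<or> j = 6 \<or> j = 7 \<or> j = 8" using j by auto
  have kk: "k = 0 \<or> k = 1 \<or> k = 2 \<or> k = 3 \<or> k = 4 \<or> k = 5" using k by auto
  have mm: "m = 0 \<or> m = 1 \<or> m = 2 \<or> m = 3 \<or> m = 4 \<or> m = 5" using m by auto
  show ?thesis using mm kk jj by (elim disjE; simp add: Vt_def Vtab_def Ptab_def tau_def tautab_def)
qed

lemma tau_bij: "m < 6 \<Longrightarrow> bij_betw (tau m) {..<6} {..<6}"
proof -
  assume m: "m < 6"
  have mm: "m = 0 \<or> m = 1 \<or> m = 2 \<or> m = 3 \<or> m = 4 \<or> m = 5" using m by auto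
  show ?thesis unfolding bij_betw_def set6 using mm
    by (elim disjE; simp add: inj_on_def tau_def tautab_def insert_commute)
qed

lemma sumVt: "k < 6 \<Longrightarrow> (\<Sum>j=1..8. Vt k j) = 1"
proof -
  assume k: "k < 6"
  have kk: "k = 0 \<or> k = 1 \<or> k = 2 \<or> k = 3 \<or> k = 4 \<or> k = 5" using k by auto
  show ?thesis unfolding set8 using kk by (elim disjE; simp add: Vt_def Vtab_def)
qed


lemma sd_ran: "is_sd 3 \<Theta> \<Longrightarrow> ran \<Theta> \<subseteq> {1..8}"
  by (simp add: is_sd_def)

lemma dF_comp: "bij \<rho> \<Longrightarrow> deFinetti x (\<Theta> \<circ> \<rho>) = deFinetti x \<Theta>"
proof -
  assume b: "bij \<rho>"
  have d: "dom (\<Theta> \<circ> \<rho>) = \<rho> -` dom \<Theta>" by (auto simp: dom_def)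
  have bb: "bij_betw \<rho> (\<rho> -` dom \<Theta>) (dom \<Theta>)"
    unfolding bij_betw_def using b inj_on_subset[OF bij_is_inj[OF b] subset_UNIV]
    by (auto simp: bij_def image_vimage_eq)
  show ?thesis unfolding deFinetti_def d
    using prod.reindex_bij_betw[OF bb, of "\<lambda>c. x (the (\<Theta> c))"] by simp
qed

lemma Cx_w: "Cx 3 w_ex"
  unfolding Cx_def w_ex_def using dF_comp by simp

lemma DF_upd: "finite (dom \<Theta>) \<Longrightarrow> c \<notin> dom \<Theta> \<Longrightarrow> DF k (\<Theta>(c \<mapsto> j)) = Vt k j * DF k \<Theta>"
proof -
  assume f: "finite (dom \<Theta>)" and c: "c \<notin> dom \<Theta>"
  have "DF k (\<Theta>(c \<mapsto> j)) = Vt k j * (\<Prod>c'\<in>dom \<Theta>. Vt k (the ((\<Theta>(c \<mapsto> j)) c')))"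
    unfolding DF_def using f c by simp
  also have "(\<Prod>c'\<in>dom \<Theta>. Vt k (the ((\<Theta>(c \<mapsto> j)) c'))) = DF k \<Theta>"
    unfolding DF_def using c by (intro prod.cong) auto
  finally show ?thesis .
qed

lemma prob_w: "prob_fn 3 w_ex"
  unfolding prob_fn_def
proof (intro conjI allI impI)
  show "w_ex Map.empty = 1" unfolding w_ex_eq by (simp add: deFinetti_def)
next
  fix \<Theta> :: sdesc
  show "0 \<le> w_ex \<Theta>" unfolding w_ex_def deFinetti_def perm_vec_def
    by (intro mult_nonneg_nonneg sum_nonneg prod_nonneg) (auto simp: bvec_def)
next
  fix \<Theta> :: sdesc and c
  assume sd: "is_sd 3 \<Theta>" and c: "c \<notin> dom \<Theta>"
  have f: "finite (dom \<Theta>)" using sd by (simp add: is_sd_def)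
  have r: "ran \<Theta> \<subseteq> {1..8}" using sd by (simp add: is_sd_def)
  have r2: "j \<in> {1..8} \<Longrightarrow> ran (\<Theta>(c \<mapsto> j)) \<subseteq> {1..8}" for j
    using r c by (auto simp: ran_def)
  have "(\<Sum>j=1..2^3. w_ex (\<Theta>(c \<mapsto> j))) = (\<Sum>j=1..8. 1/6 * (\<Sum>k<6. Vt k j * DF k \<Theta>))"
  proof (rule sum.cong)
    fix j :: nat assume j: "j \<in> {1..8}"
    show "w_ex (\<Theta>(c \<mapsto> j)) = 1/6 * (\<Sum>k<6. Vt k j * DF k \<Theta>)"
      using w_ex_DF[OF r2[OF j]] DF_upd[OF f c] by simp
  qed simp
  also have "\<dots> = 1/6 * (\<Sum>j=1..8. \<Sum>k<6. Vt k j * DF k \<Theta>)" by (simp add: sum_distrib_left)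
  also have "\<dots> = 1/6 * (\<Sum>k<6. \<Sum>j=1..8. Vt k j * DF k \<Theta>)"
    by (rule arg_cong[where f="\<lambda>x. 1/6*x"], rule sum.swap)
  also have "\<dots> = 1/6 * (\<Sum>k<6. DF k \<Theta> * (\<Sum>j=1..8. Vt k j))"
    by (intro arg_cong[where f="\<lambda>x. 1/6*x"] sum.cong refl) (simp add: sum_distrib_left mult.commute)
  also have "\<dots> = 1/6 * (\<Sum>k<6. DF k \<Theta>)" using sumVt by simp
  also have "\<dots> = w_ex \<Theta>" using w_ex_DF[OF r] by simp
  finally show "(\<Sum>j=1..2^3. w_ex (\<Theta>(c \<mapsto> j))) = w_ex \<Theta>" .
qed

lemma Px_w: "Px 3 w_ex"
  unfolding Px_def
proof (intro allI impI)
  fix \<pi> :: "nat \<Rightarrow> nat" and \<Theta> :: sdesc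
  assume p: "\<pi> permutes {1..3}" and sd: "is_sd 3 \<Theta>"
  then obtain m where m: "m < 6" "\<pi> = pk m" using perm_set by blast
  have r: "ran \<Theta> \<subseteq> {1..8}" using sd by (simp add: is_sd_def)
  define \<Theta>' where "\<Theta>' = map_option (patom 3 (pk m)) \<circ> \<Theta>"
  have inr: "c \<in> dom \<Theta> \<Longrightarrow> the (\<Theta> c) \<in> {1..8}" for c using r by (auto simp: ran_def)
  have r': "ran \<Theta>' \<subseteq> {1..8}"
  proof
    fix y assume "y \<in> ran \<Theta>'"
    then obtain c where "\<Theta>' c = Some y" by (auto simp: ran_def)
    then obtain x where x: "\<Theta> c = Some x" "y = patom 3 (pk m) x" by (auto simp: \<Theta>'_def)
    then have "x \<in> {1..8}" using r by (auto simp: ran_def)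
    then show "y \<in> {1..8}" using x patom_pk[OF m(1)] Ptab_range[OF m(1)] by simp
  qed
  have dd: "dom \<Theta>' = dom \<Theta>" by (auto simp: \<Theta>'_def)
  have DFe: "DF k \<Theta>' = DF (tau m k) \<Theta>" if k: "k < 6" for k
    unfolding DF_def dd
  proof (rule prod.cong)
    fix c assume c: "c \<in> dom \<Theta>"
    then have "the (\<Theta>' c) = Ptab ! m ! (the (\<Theta> c) - 1)"
      using inr[OF c] patom_pk[OF m(1)] by (auto simp: \<Theta>'_def)
    then show "Vt k (the (\<Theta>' c)) = Vt (tau m k) (the (\<Theta> c))"
      using tau_Vt[OF m(1) k inr[OF c]] by simp
  qed simp
  have "w_ex \<Theta>' = 1/6 * (\<Sum>k<6. DF (tau m k) \<Theta>)" using w_ex_DF[OF r'] DFe by simp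
  also have "(\<Sum>k<6. DF (tau m k) \<Theta>) = (\<Sum>k<6. DF k \<Theta>)"
    using sum.reindex_bij_betw[OF tau_bij[OF m(1)], of "\<lambda>k. DF k \<Theta>"] by simp
  finally show "w_ex (map_option (patom 3 \<pi>) \<circ> \<Theta>) = w_ex \<Theta>"
    using w_ex_DF[OF r] m(2) by (simp add: \<Theta>'_def comp_def)
qed



lemma sep_insert: "{x \<in> insert a A. P x} = (if P a then insert a {x \<in> A. P x} else {x \<in> A. P x})"
  by auto

lemma gam: "gamma 3 2 = 1" "gamma 3 3 = 1" "gamma 3 4 = 2" "gamma 3 5 = 1" "gamma 3 6 = 2" "gamma 3 7 = 2"
  unfolding gamma_def set3 sep_insert by (simp_all add: atom_pos_def bit_nat_def)

lemma domT: "dom Theta_ex = {1,2,3,4,5}" by (auto simp: Theta_ex_def)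
lemma domP: "dom Phi_ex = {1,2,3,4,5}" by (auto simp: Phi_ex_def)
lemma ranT: "ran Theta_ex = {2,4,5,7}" by (simp add: Theta_ex_def insert_commute)
lemma ranP: "ran Phi_ex = {3,5,6,7}" by (simp add: Phi_ex_def insert_commute)

lemma sdT: "is_sd 3 Theta_ex" by (simp add: is_sd_def domT ranT)
lemma sdP: "is_sd 3 Phi_ex" by (simp add: is_sd_def domP ranP)

lemma spec: "P_spectrum 3 Theta_ex = P_spectrum 3 Phi_ex"
  unfolding P_spectrum_def domT domP ranT ranP sep_insert
  by (simp add: upt_rec gam Theta_ex_def Phi_ex_def add_mset_commute)

lemma wne: "w_ex Theta_ex \<noteq> w_ex Phi_ex"
  unfolding w_ex_DF[OF sd_ran[OF sdT]] w_ex_DF[OF sd_ran[OF sdP]] DF_def domT domP set6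
  by (simp add: Theta_ex_def Phi_ex_def Vt_def Vtab_def)


theorem mainTheorem2:
  shows "prob_fn 3 w_ex \<and> Cx 3 w_ex \<and> Px 3 w_ex \<and> \<not> SPx 3 w_ex \<and>
         is_sd 3 Theta_ex \<and> is_sd 3 Phi_ex \<and> dom Theta_ex = dom Phi_ex \<and>
         P_spectrum 3 Theta_ex = P_spectrum 3 Phi_ex \<and> w_ex Theta_ex \<noteq> w_ex Phi_ex"
proof -
  have "\<not> SPx 3 w_ex" unfolding SPx_def using sdT sdP spec wne domT domP by blast
  then show ?thesis using prob_w Cx_w Px_w sdT sdP spec wne domT domP by simp
qed

end
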